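(* Let $K\subset\mathbb{R}^d$ be a convex body and suppose there is a positive, locally finite Borel measure $\mu$ on $\mathbb{R}^d$ with $\mathbf{1}_K\ast\mu=\mathbf{1}_{K^c}$ a.e., where $K^c=\mathbb{R}^d\setminus K$. Let $x$ be a regular boundary point of $K$ with exterior normal unit vector $\xi$. Then $\mu(-S(K,-\xi)+x)\ge 1$.
   Context: A convex body is a compact convex set with nonempty interior. A boundary point is regular if $K$ has a unique support hyperplane there; its exterior normal unit vector $\xi$ satisfies $K\subset\{z:\langle z,\xi\rangle\le\langle x,\xi\rangle\}$. For a unit vector $\eta$, $S(K,\eta)$ denotes the support set of $K$ determined by $\eta$, i.e. the set of points of $K$ maximizing $\langle\cdot,\eta\rangle$. *)

theory Defs
  imports "HOL-Analysis.Analysis"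
begin

definition convex_body :: "'a::euclidean_space set \<Rightarrow> bool" where
  "convex_body K \<longleftrightarrow> convex K \<and> compact K \<and> interior K \<noteq> {}"

definition locally_finite_measure :: "'a::topological_space measure \<Rightarrow> bool" where
  "locally_finite_measure M \<longleftrightarrow>
     (\<forall>x. \<exists>U. open U \<and> x \<in> U \<and> emeasure M U < \<infinity>)"

definition exterior_normal :: "'a::euclidean_space set \<Rightarrow> 'a \<Rightarrow> 'a \<Rightarrow> bool" where
  "exterior_normal K x u \<longleftrightarrow> norm u = 1 \<and> (\<forall>z\<in>K. z \<bullet> u \<le> x \<bullet> u)"

definition regular_boundary_point :: "'a::euclidean_space set \<Rightarrow> 'a \<Rightarrow> bool" where
  "regular_boundary_point K x \<longleftrightarrow> x \<in> frontier K \<and> (\<exists>!u. exterior_normal K x u)"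

definition support_set :: "'a::euclidean_space set \<Rightarrow> 'a \<Rightarrow> 'a set" where
  "support_set K \<eta> = {y \<in> K. \<forall>z\<in>K. z \<bullet> \<eta> \<le> y \<bullet> \<eta>}"

definition indicator_conv :: "'a::euclidean_space set \<Rightarrow> 'a measure \<Rightarrow> 'a \<Rightarrow> ennreal" where
  "indicator_conv K M y = (\<integral>\<^sup>+ z. indicator K (y - z) \<partial>M)"

end

theory Submission
  imports Defs
begin

lemma ae_open_exists:
  fixes U :: "'a::euclidean_space set"
  assumes "open U" "U \<noteq> {}" "AE y in lborel. P y"
  shows "\<exists>y\<in>U. P y"
proof (rule ccontr)
  assume "\<not> ?thesis"
  then have "AE y in lborel. y \<in> - U" using assms(3) by (auto elim: AE_mp)
  then have "AE y in lebesgue. y \<in> - U" by (rule AE_completion)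
  then have "AE y \<in> U in lebesgue. y \<in> - U" by (auto elim: AE_mp)
  moreover obtain u where "u \<in> U" using assms(2) by auto
  ultimately have "u \<in> - U"
    using mem_closed_if_AE_lebesgue_open[OF assms(1), of "- U"] assms(1) by auto
  then show False using \<open>u \<in> U\<close> by auto
qed

lemma conv_eq:
  fixes K :: "'a::euclidean_space set"
  assumes "compact K" "sets \<mu> = sets borel"
  shows "indicator_conv K \<mu> y = emeasure \<mu> ((\<lambda>k. y - k) ` K)"
proof -
  have eq: "(\<lambda>k. y - k) ` K = {z. y - z \<in> K}"
  proof
    show "(\<lambda>k. y - k) ` K \<subseteq> {z. y - z \<in> K}" by auto
    show "{z. y - z \<in> K} \<subseteq> (\<lambda>k. y - k) ` K"
    proof
      fix z assume "z \<in> {z. y - z \<in> K}"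
      then have "y - z \<in> K" by simp
      moreover have "z = y - (y - z)" by simp
      ultimately show "z \<in> (\<lambda>k. y - k) ` K" by (rule rev_image_eqI)
    qed
  qed
  have "compact ((\<lambda>k. y - k) ` K)"
    by (intro compact_continuous_image assms(1) continuous_intros)
  then have m: "(\<lambda>k. y - k) ` K \<in> sets \<mu>"
    using assms(2) by (simp add: borel_compact)
  have ind: "(\<lambda>z. indicator K (y - z)) = (indicator ((\<lambda>k. y - k) ` K) :: 'a \<Rightarrow> ennreal)"
    unfolding eq by (rule ext) (simp add: indicator_def)
  have "indicator_conv K \<mu> y = (\<integral>\<^sup>+ z. indicator ((\<lambda>k. y - k) ` K) z \<partial>\<mu>)"
    unfolding indicator_conv_def ind by simp
  also have "\<dots> = emeasure \<mu> ((\<lambda>k. y - k) ` K)"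
    using m by (rule nn_integral_indicator)
  finally show ?thesis .
qed

lemma compact_finite_measure:
  fixes \<mu> :: "'a::euclidean_space measure"
  assumes "locally_finite_measure \<mu>" "sets \<mu> = sets borel" "compact C"
  shows "emeasure \<mu> C < \<infinity>"
proof -
  obtain U where U: "\<And>x. open (U x) \<and> x \<in> U x \<and> emeasure \<mu> (U x) < \<infinity>"
    using assms(1) unfolding locally_finite_measure_def by metis
  obtain F where F: "F \<subseteq> C" "finite F" "C \<subseteq> (\<Union>c\<in>F. U c)"
    using compactE_image[OF assms(3), of C U] U by blast
  have sU: "\<And>c. U c \<in> sets \<mu>" using U assms(2) by auto
  have "emeasure \<mu> C \<le> emeasure \<mu> (\<Union>c\<in>F. U c)"
    using F sU by (intro emeasure_mono) auto
  also have "\<dots> \<le> (\<Sum>c\<in>F. emeasure \<mu> (U c))"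
    using F sU by (intro emeasure_subadditive_finite) auto
  also have "\<dots> < \<infinity>"
  proof -
    have "emeasure \<mu> (U c) \<noteq> \<infinity>" for c using U[of c] by auto
    then have "(\<Sum>c\<in>F. emeasure \<mu> (U c)) \<noteq> \<infinity>" using F(2) by simp
    then show ?thesis by (simp add: less_top[symmetric])
  qed
  finally show ?thesis .
qed

theorem lemma4p4:
  fixes K :: "'a::euclidean_space set" and \<mu> :: "'a measure" and x \<xi> :: 'a
  assumes "convex_body K"
    and "sets \<mu> = sets borel"
    and "locally_finite_measure \<mu>"
    and "AE y in lborel. indicator_conv K \<mu> y = indicator (UNIV - K) y"
    and "regular_boundary_point K x"
    and "exterior_normal K x \<xi>"
  shows "emeasure \<mu> ((\<lambda>s. x - s) ` support_set K (- \<xi>)) \<ge> 1"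
proof -
  define P where "P y \<longleftrightarrow> indicator_conv K \<mu> y = indicator (UNIV - K) y" for y
  define T where "T y = (\<lambda>k. y - k) ` K" for y
  have cK: "compact K" "convex K" "interior K \<noteq> {}"
    using assms(1) by (auto simp: convex_body_def)
  have clK: "closed K" using cK by (simp add: compact_imp_closed)
  have xfr: "x \<in> frontier K" using assms(5) by (simp add: regular_boundary_point_def)
  have xK: "x \<in> K" using xfr clK by (metis closure_closed frontier_def DiffD1)
  have AEP: "AE y in lborel. P y" using assms(4) by (simp add: P_def)
  have TP: "P y \<Longrightarrow> emeasure \<mu> (T y) = indicator (UNIV - K) y" for y
    using conv_eq[OF cK(1) assms(2), of y] by (simp add: P_def T_def)
  have Tcomp: "compact (T y)" for y
    unfolding T_def by (intro compact_continuous_image cK continuous_intros)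
  have Tsets: "T y \<in> sets \<mu>" for y
    using Tcomp assms(2) by (simp add: borel_compact)
  define F where "F = {interior (T y) | y. y \<in> interior K \<and> P y}"
  define Ob where "Ob = \<Union>F"
  have Oopen: "open Ob" unfolding Ob_def F_def by auto
  have Osets: "Ob \<in> sets \<mu>" using Oopen assms(2) by auto
  have O0: "emeasure \<mu> Ob = 0"
  proof -
    obtain F' where F': "F' \<subseteq> F" "countable F'" "\<Union>F' = \<Union>F"
      using Lindelof[of F] unfolding F_def by auto
    have "(\<Union>i\<in>F'. i) \<in> null_sets \<mu>"
    proof (rule null_sets_UN'[OF F'(2)])
      fix i assume "i \<in> F'"
      then obtain y where y: "i = interior (T y)" "y \<in> interior K" "P y"
        using F'(1) unfolding F_def by auto
      have "y \<in> K" using y(2) interior_subset by auto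
      then have "emeasure \<mu> (T y) = 0" using TP[OF y(3)] by simp
      moreover have "emeasure \<mu> i \<le> emeasure \<mu> (T y)"
        using y(1) Tsets interior_subset by (intro emeasure_mono) auto
      moreover have "i \<in> sets \<mu>" using y(1) assms(2) by auto
      ultimately show "i \<in> null_sets \<mu>" by auto
    qed
    then show ?thesis using F'(3) unfolding Ob_def by auto
  qed
  have key: "k \<in> support_set K (- \<xi>)" if k: "k \<in> K" "x - k \<notin> Ob" for k
  proof -
    let ?V = "(+) (x - k) ` interior K"
    have disj: "interior K \<inter> ?V = {}"
    proof (rule ccontr)
      assume ne: "interior K \<inter> ?V \<noteq> {}"
      have "open (interior K \<inter> ?V)"
        by (intro open_Int open_interior open_translation)
      then obtain y where y: "y \<in> interior K \<inter> ?V" "P y"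
        using ae_open_exists[OF _ ne AEP] by blast
      then obtain a where a: "a \<in> interior K" "y = (x - k) + a" by auto
      obtain r where r: "r > 0" "ball a r \<subseteq> K"
        using a(1) mem_interior by (metis interior_subset order_trans)
      have "ball (x - k) r \<subseteq> T y"
      proof
        fix w assume w: "w \<in> ball (x - k) r"
        have "a - (y - w) = - ((x - k) - w)" using a(2) by (simp add: algebra_simps)
        then have "dist a (y - w) = dist (x - k) w" by (simp only: dist_norm norm_minus_cancel)
        then have "y - w \<in> ball a r" using w by simp
        then have "y - w \<in> K" using r by auto
        then show "w \<in> T y" unfolding T_def by (auto simp: image_iff intro!: bexI[of _ "y - w"])
      qed
      then have "x - k \<in> interior (T y)" using r mem_interior by blast
      then have "x - k \<in> Ob" using y unfolding Ob_def F_def by auto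
      then show False using k by auto
    qed
    obtain u b where ub: "u \<noteq> 0" "\<forall>a\<in>interior K. inner u a \<le> b" "\<forall>w\<in>?V. inner u w \<ge> b"
      using separating_hyperplane_sets[of "interior K" ?V] disj cK
      by (auto simp: convex_interior convex_translation)
    have Kcl: "K = closure (interior K)"
      using convex_closure_interior[OF cK(2,3)] clK by (simp add: closure_closed)
    have h1: "inner u a \<le> b" if "a \<in> K" for a
    proof -
      have "closure (interior K) \<subseteq> {a. inner u a \<le> b}"
        using ub(2) by (intro closure_minimal) (auto intro: closed_halfspace_le)
      then show ?thesis using that Kcl by auto
    qed
    have h2: "b \<le> inner u ((x - k) + a)" if "a \<in> K" for a
    proof -
      have "closure (interior K) \<subseteq> {a. b \<le> inner u ((x - k) + a)}"
        using ub(3) by (intro closure_minimal) (auto intro!: closed_Collect_le continuous_intros)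
      then show ?thesis using that Kcl by auto
    qed
    define v where "v = u /\<^sub>R norm u"
    have nu: "norm u > 0" using ub(1) by simp
    have "exterior_normal K x v"
      unfolding exterior_normal_def
    proof
      show "norm v = 1" using nu by (simp add: v_def)
      show "\<forall>z\<in>K. z \<bullet> v \<le> x \<bullet> v"
      proof
        fix z assume "z \<in> K"
        have "inner u z \<le> inner u x" using h1[OF \<open>z \<in> K\<close>] h2[OF k(1)] by simp
        then show "z \<bullet> v \<le> x \<bullet> v" using nu
          by (simp add: v_def inner_commute divide_right_mono)
      qed
    qed
    then have "v = \<xi>" using assms(5,6) unfolding regular_boundary_point_def by blast
    have "b' \<bullet> (- \<xi>) \<le> k \<bullet> (- \<xi>)" if "b' \<in> K" for b'
    proof -
      have "inner u x \<le> inner u ((x - k) + b')" using h1[OF xK] h2[OF that] by simp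
      then have "inner u k \<le> inner u b'" by (simp add: inner_diff_right inner_add_right)
      then have "k \<bullet> v \<le> b' \<bullet> v" using nu
        by (simp add: v_def inner_commute divide_right_mono)
      then show ?thesis using \<open>v = \<xi>\<close> by simp
    qed
    then show ?thesis using k(1) by (simp add: support_set_def)
  qed
  define G where "G n = (\<lambda>p. fst p - snd p) ` (cball x (1 / Suc n) \<times> K) - Ob" for n :: nat
  have Gcomp: "compact (G n)" for n
  proof -
    have c: "compact (cball x (1 / Suc n) \<times> K)" by (intro compact_Times compact_cball cK(1))
    have "continuous_on UNIV (\<lambda>p::'a \<times> 'a. fst p - snd p)" by (intro continuous_intros)
    then have "compact ((\<lambda>p. fst p - snd p) ` (cball x (1 / Suc n) \<times> K))"
      using c by (metis compact_continuous_image continuous_on_subset subset_UNIV)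
    then show ?thesis unfolding G_def using Oopen by (rule compact_diff)
  qed
  have Gsets: "G n \<in> sets \<mu>" for n
    using Gcomp assms(2) by (simp add: borel_compact)
  have Gdec: "decseq G"
  proof (rule decseq_SucI)
    fix n
    have "cball x (1 / Suc (Suc n)) \<subseteq> cball x (1 / Suc n)"
      by (intro subset_cball) (simp add: frac_le)
    then show "G (Suc n) \<subseteq> G n" unfolding G_def by blast
  qed
  have Gfin: "emeasure \<mu> (G n) \<noteq> \<infinity>" for n
    using compact_finite_measure[OF assms(3,2) Gcomp[of n]] by auto
  have Gge: "1 \<le> emeasure \<mu> (G n)" for n
  proof -
    have "ball x (1 / Suc n) - K \<noteq> {}"
    proof -
      have "(1::real) / Suc n > 0" by simp
      then obtain w where "w \<notin> K" "dist x w < 1 / Suc n"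
        using xfr unfolding frontier_straddle by (metis dist_commute)
      then show ?thesis by auto
    qed
    moreover have "open (ball x (1 / Suc n) - K)" using clK by auto
    ultimately obtain y where y: "y \<in> ball x (1 / Suc n) - K" "P y"
      using ae_open_exists[OF _ _ AEP] by blast
    have "1 = emeasure \<mu> (T y)" using TP[OF y(2)] y(1) by simp
    also have "\<dots> \<le> emeasure \<mu> (G n \<union> Ob)"
    proof (rule emeasure_mono)
      show "T y \<subseteq> G n \<union> Ob"
      proof
        fix w assume "w \<in> T y"
        then obtain k where k: "k \<in> K" "w = y - k" unfolding T_def by auto
        have "(y, k) \<in> cball x (1 / Suc n) \<times> K" using y(1) k(1) by auto
        then have "w \<in> (\<lambda>p. fst p - snd p) ` (cball x (1 / Suc n) \<times> K)"
          using k(2) by (metis (no_types, lifting) fst_conv snd_conv rev_image_eqI)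
        then show "w \<in> G n \<union> Ob" unfolding G_def by blast
      qed
    qed (use Gsets Osets in auto)
    also have "\<dots> \<le> emeasure \<mu> (G n) + emeasure \<mu> Ob"
      using Gsets Osets by (intro emeasure_subadditive) auto
    also have "\<dots> = emeasure \<mu> (G n)" using O0 by simp
    finally show ?thesis .
  qed
  have Sclosed: "closed ((\<lambda>s. x - s) ` support_set K (- \<xi>))"
  proof -
    have "support_set K (- \<xi>) = K \<inter> (\<Inter>z\<in>K. {y. z \<bullet> (- \<xi>) \<le> y \<bullet> (- \<xi>)})"
      by (auto simp: support_set_def)
    moreover have "closed (K \<inter> (\<Inter>z\<in>K. {y. z \<bullet> (- \<xi>) \<le> y \<bullet> (- \<xi>)}))"
      using clK by (intro closed_Int closed_INT) (auto intro!: closed_Collect_le continuous_intros)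
    ultimately have "compact (support_set K (- \<xi>))"
      using cK(1) by (metis compact_Int_closed inf.absorb_iff1 inf_le1 inf_commute)
    then have "compact ((\<lambda>s. x - s) ` support_set K (- \<xi>))"
      by (intro compact_continuous_image continuous_intros)
    then show ?thesis by (rule compact_imp_closed)
  qed
  have Isub: "(\<Inter>n. G n) \<subseteq> (\<lambda>s. x - s) ` support_set K (- \<xi>)"
  proof
    fix z assume z: "z \<in> (\<Inter>n. G n)"
    then have zO: "z \<notin> Ob" unfolding G_def by auto
    have "x - z \<in> K"
    proof -
      have "\<exists>k'\<in>K. dist k' (x - z) < e" if e: "e > 0" for e
      proof -
        obtain n :: nat where n: "1 / Suc n < e"
          using e by (metis nat_approx_posE)
        have "z \<in> G n" using z by auto
        then obtain y k' where yk: "y \<in> cball x (1 / Suc n)" "k' \<in> K" "z = y - k'"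
          unfolding G_def by auto
        have "dist k' (x - z) = dist x y" proof -
          have "k' - (x - z) = y - x" using yk(3) by (simp add: algebra_simps)
          then have "dist k' (x - z) = norm (y - x)" by (simp only: dist_norm)
          then show ?thesis by (metis dist_norm norm_minus_commute)
        qed
        also have "\<dots> < e" using yk(1) n by simp
        finally show ?thesis using yk(2) by blast
      qed
      then show ?thesis using closed_approachable[OF clK] by blast
    qed
    moreover have "x - (x - z) \<notin> Ob" using zO by simp
    ultimately have "x - z \<in> support_set K (- \<xi>)" by (rule key)
    then show "z \<in> (\<lambda>s. x - s) ` support_set K (- \<xi>)"
      by (auto simp: image_iff intro!: bexI[of _ "x - z"])
  qed
  have "1 \<le> (INF n. emeasure \<mu> (G n))" using Gge by (auto intro: INF_greatest)
  also have "\<dots> = emeasure \<mu> (\<Inter>n. G n)"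
    using Gsets Gdec Gfin by (intro INF_emeasure_decseq) auto
  also have "\<dots> \<le> emeasure \<mu> ((\<lambda>s. x - s) ` support_set K (- \<xi>))"
    using Isub Sclosed assms(2) by (intro emeasure_mono) auto
  finally show ?thesis .
qed

end
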